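(* Let $n\ge 2$ and let $A$ be an $n\times n$ real matrix with spectrum $\{\lambda_1,\dots,\lambda_n\}$ (counting multiplicities). Suppose $\lambda_1$ is real and associated with a real eigenvector $v$ with no zero components, let $D=\mathrm{diag}(v)$ and $B=D^{-1}AD$. Then for every $p\in\mathbb{N}\cup\{\infty\}$, every $i=2,\dots,n$ and every $k\in\mathbb{N}$, $$|\lambda_i|\le\sqrt[k]{\tau_p(B^k)}.$$
   Context: For an $n\times n$ real matrix $M$ ($n\ge 2$) and $p\in\mathbb{N}\cup\{\infty\}$, define $$\tau_p(M)=\max\{\|M^Tx\|_p: x\in\mathbb{R}^n,\ x^Te=0,\ \|x\|_p=1\},$$ where $e$ is the all-ones vector and $\|\cdot\|_p$ is the $\ell_p$-norm. *)

theory Defs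
  imports Complex_Main "HOL-Library.Extended_Nat" "Jordan_Normal_Form.Char_Poly"
begin

text \<open>The l_p norm of a real vector, for p a positive natural number or infinity
  (p is an extended natural; the value for p = 0 is irrelevant, the theorem assumes p >= 1).\<close>
definition lp_norm :: "enat \<Rightarrow> real vec \<Rightarrow> real" where
  "lp_norm p x = (case p of
      enat q \<Rightarrow> (\<Sum>i<dim_vec x. \<bar>x $ i\<bar> powr real q) powr (1 / real q)
    | \<infinity> \<Rightarrow> Max (insert 0 {\<bar>x $ i\<bar> | i. i < dim_vec x}))"

text \<open>tau_p(M) = max { ||M^T x||_p : x^T e = 0, ||x||_p = 1 } (the maximum is attained,
  so it equals the supremum).\<close>
definition tau :: "enat \<Rightarrow> real mat \<Rightarrow> real" where
  "tau p M = Sup {lp_norm p (transpose_mat M *\<^sub>v x) | x.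
      x \<in> carrier_vec (dim_row M) \<and> (\<Sum>i<dim_vec x. x $ i) = 0 \<and> lp_norm p x = 1}"

end

theory Submission
  imports Defs
begin


lemma inf_set_eq: "{\<bar>x $ i\<bar> | i. i < dim_vec x} = (\<lambda>i. \<bar>x $ i\<bar>) ` {..<dim_vec x}"
  by auto

lemma lp_norm_nonneg: "lp_norm p x \<ge> 0"
  unfolding lp_norm_def
  by (cases p, auto simp: inf_set_eq)

lemma lp_norm_coord:
  assumes "p \<ge> 1" "j < dim_vec x"
  shows "\<bar>x $ j\<bar> \<le> lp_norm p x"
proof (cases p)
  case (enat q)
  with assms have q: "q \<ge> 1" by (simp add: one_enat_def)
  let ?S = "\<Sum>i<dim_vec x. \<bar>x $ i\<bar> powr real q"
  have "\<bar>x $ j\<bar> powr real q \<le> ?S"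
    by (rule member_le_sum, insert assms, auto)
  hence "(\<bar>x $ j\<bar> powr real q) powr (1 / real q) \<le> ?S powr (1 / real q)"
    by (intro powr_mono2, auto)
  moreover have "(\<bar>x $ j\<bar> powr real q) powr (1 / real q) = \<bar>x $ j\<bar>"
    using q by (simp add: powr_powr)
  ultimately show ?thesis using enat unfolding lp_norm_def by simp
next
  case infinity
  then show ?thesis using assms unfolding lp_norm_def inf_set_eq infinity
    by (auto intro!: Max_ge)
qed

lemma lp_norm_bound:
  assumes "m \<ge> 0"
  shows "\<exists>K. \<forall>x. dim_vec x = d \<longrightarrow> (\<forall>j<d. \<bar>x $ j\<bar> \<le> m) \<longrightarrow> lp_norm p x \<le> K"
proof (cases p)
  case (enat q)
  show ?thesis
  proof (intro exI allI impI)
    fix x :: "real vec"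
    assume d: "dim_vec x = d" and b: "\<forall>j<d. \<bar>x $ j\<bar> \<le> m"
    have "(\<Sum>i<dim_vec x. \<bar>x $ i\<bar> powr real q) \<le> (\<Sum>i<d. m powr real q)"
      unfolding d by (rule sum_mono, rule powr_mono2, insert b, auto)
      
    hence "(\<Sum>i<dim_vec x. \<bar>x $ i\<bar> powr real q) powr (1 / real q) \<le> (\<Sum>i<d. m powr real q) powr (1 / real q)"
      by (intro powr_mono2, auto intro: sum_nonneg)
    thus "lp_norm p x \<le> (\<Sum>i<d. m powr real q) powr (1 / real q)"
      using enat unfolding lp_norm_def by simp
  qed
next
  case infinity
  show ?thesis
  proof (intro exI allI impI)
    fix x :: "real vec"
    assume d: "dim_vec x = d" and b: "\<forall>j<d. \<bar>x $ j\<bar> \<le> m"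
    show "lp_norm p x \<le> m"
      using infinity d b assms unfolding lp_norm_def inf_set_eq by (auto simp: Max_le_iff)
  qed
qed

lemma lp_norm_smult_le_inf:
  "lp_norm \<infinity> (c \<cdot>\<^sub>v x) \<le> \<bar>c\<bar> * lp_norm \<infinity> x"
proof -
  have ge: "\<bar>x $ i\<bar> \<le> lp_norm \<infinity> x" if "i < dim_vec x" for i
    using lp_norm_coord[of \<infinity> i x] that by simp
  show ?thesis
    unfolding lp_norm_def[of \<infinity> "c \<cdot>\<^sub>v x"] inf_set_eq
    using ge lp_norm_nonneg[of \<infinity> x]
    by (auto simp: Max_le_iff abs_mult intro: mult_left_mono)
qed

lemma lp_norm_smult:
  assumes "p \<ge> 1"
  shows "lp_norm p (c \<cdot>\<^sub>v x) = \<bar>c\<bar> * lp_norm p x"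
proof (cases p)
  case (enat q)
  with assms have q: "q \<ge> 1" by (simp add: one_enat_def)
  have "(\<Sum>i<dim_vec x. \<bar>c * x $ i\<bar> powr real q) = \<bar>c\<bar> powr real q * (\<Sum>i<dim_vec x. \<bar>x $ i\<bar> powr real q)"
    by (simp add: abs_mult powr_mult sum_distrib_left)
  hence "(\<Sum>i<dim_vec x. \<bar>c * x $ i\<bar> powr real q) powr (1 / real q) = 
     (\<bar>c\<bar> powr real q) powr (1 / real q) * (\<Sum>i<dim_vec x. \<bar>x $ i\<bar> powr real q) powr (1 / real q)"
    by (simp add: powr_mult sum_nonneg)
  also have "(\<bar>c\<bar> powr real q) powr (1 / real q) = \<bar>c\<bar>" using q by (simp add: powr_powr)
  finally show ?thesis using enat unfolding lp_norm_def by simp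
next
  case infinity
  show ?thesis
  proof (cases "c = 0")
    case True
    have "lp_norm \<infinity> (c \<cdot>\<^sub>v x) \<le> 0" using lp_norm_smult_le_inf[of c x] True by simp
    with lp_norm_nonneg[of \<infinity> "c \<cdot>\<^sub>v x"] True infinity show ?thesis by simp
  next
    case False
    have "lp_norm \<infinity> x = lp_norm \<infinity> ((1/c) \<cdot>\<^sub>v (c \<cdot>\<^sub>v x))"
      using False by (simp add: smult_smult_assoc)
    also have "\<dots> \<le> \<bar>1/c\<bar> * lp_norm \<infinity> (c \<cdot>\<^sub>v x)" by (rule lp_norm_smult_le_inf)
    finally have "\<bar>c\<bar> * lp_norm \<infinity> x \<le> lp_norm \<infinity> (c \<cdot>\<^sub>v x)" 
      using False by (simp add: field_simps)
    with lp_norm_smult_le_inf[of c x] infinity show ?thesis by simp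
  qed
qed

lemma tau_bdd:
  assumes M: "M \<in> carrier_mat n n" and p: "p \<ge> 1"
  shows "bdd_above {lp_norm p (transpose_mat M *\<^sub>v x) | x.
      x \<in> carrier_vec (dim_row M) \<and> (\<Sum>i<dim_vec x. x $ i) = 0 \<and> lp_norm p x = 1}"
proof -
  define m where "m = (\<Sum>l<n. \<Sum>j<n. \<bar>M $$ (l,j)\<bar>)"
  have m0: "m \<ge> 0" unfolding m_def by (auto intro: sum_nonneg)
  from lp_norm_bound[OF m0, of n p] obtain K where
    K: "\<And>x. dim_vec x = n \<Longrightarrow> (\<forall>j<n. \<bar>x $ j\<bar> \<le> m) \<Longrightarrow> lp_norm p x \<le> K" by blast
  show ?thesis unfolding bdd_above_def
  proof (intro exI allI ballI)
    fix y assume "y \<in> {lp_norm p (transpose_mat M *\<^sub>v x) | x.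
      x \<in> carrier_vec (dim_row M) \<and> (\<Sum>i<dim_vec x. x $ i) = 0 \<and> lp_norm p x = 1}"
    then obtain x where y: "y = lp_norm p (transpose_mat M *\<^sub>v x)" and x: "x \<in> carrier_vec n"
      and x1: "lp_norm p x = 1" using M by auto
    have xb: "\<bar>x $ l\<bar> \<le> 1" if "l < n" for l using lp_norm_coord[OF p, of l x] x x1 that by auto
    have "\<bar>(transpose_mat M *\<^sub>v x) $ j\<bar> \<le> m" if j: "j < n" for j
    proof -
      have "(transpose_mat M *\<^sub>v x) $ j = (\<Sum>l<n. M $$ (l,j) * x $ l)"
        using M x j by (simp add: scalar_prod_def atLeast0LessThan)
      also have "\<bar>\<dots>\<bar> \<le> (\<Sum>l<n. \<bar>M $$ (l,j) * x $ l\<bar>)" by (rule sum_abs)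
      also have "\<dots> \<le> (\<Sum>l<n. \<bar>M $$ (l,j)\<bar>)"
        by (rule sum_mono, insert xb, auto simp: abs_mult intro: mult_left_le)
      also have "\<dots> \<le> m" unfolding m_def
        by (rule sum_mono, rule member_le_sum, insert j, auto)
      finally show ?thesis .
    qed
    thus "y \<le> K" unfolding y using M x by (intro K, auto)
  qed
qed

lemma tau_bound:
  assumes M: "M \<in> carrier_mat n n" and p: "p \<ge> 1" and x: "x \<in> carrier_vec n"
    and s: "(\<Sum>i<n. x $ i) = 0"
  shows "lp_norm p (transpose_mat M *\<^sub>v x) \<le> tau p M * lp_norm p x"
proof (cases "lp_norm p x = 0")
  case True
  have "x = 0 \<cdot>\<^sub>v x"
    using lp_norm_coord[OF p, of _ x] True x by (intro eq_vecI, auto)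
  hence "transpose_mat M *\<^sub>v x = 0 \<cdot>\<^sub>v (transpose_mat M *\<^sub>v x)"
    by (metis M x carrier_matD(1) carrier_matD(2) mult_mat_vec transpose_carrier_mat)
  hence "lp_norm p (transpose_mat M *\<^sub>v x) = lp_norm p (0 \<cdot>\<^sub>v (transpose_mat M *\<^sub>v x))" by simp
  hence "lp_norm p (transpose_mat M *\<^sub>v x) = 0" using lp_norm_smult[OF p] by simp
  thus ?thesis using True by simp
next
  case False
  define c where "c = lp_norm p x"
  have c: "c > 0" using False lp_norm_nonneg[of p x] unfolding c_def by auto
  define x' where "x' = (1/c) \<cdot>\<^sub>v x"
  have x'c: "x' \<in> carrier_vec (dim_row M)" using x M unfolding x'_def by auto
  have x's: "(\<Sum>i<dim_vec x'. x' $ i) = 0"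
    using x s unfolding x'_def by (simp add: sum_divide_distrib[symmetric])
  have x'1: "lp_norm p x' = 1" unfolding x'_def lp_norm_smult[OF p] c_def[symmetric] using c by simp
  have "lp_norm p (transpose_mat M *\<^sub>v x') \<le> tau p M"
    unfolding tau_def by (rule cSup_upper[OF _ tau_bdd[OF M p]], insert x'c x's x'1, blast)
  moreover have "transpose_mat M *\<^sub>v x' = (1/c) \<cdot>\<^sub>v (transpose_mat M *\<^sub>v x)"
    unfolding x'_def using M x by (metis carrier_matD(1) carrier_matD(2) mult_mat_vec transpose_carrier_mat)
  ultimately have "(1/c) * lp_norm p (transpose_mat M *\<^sub>v x) \<le> tau p M"
    using lp_norm_smult[OF p] c by simp
  thus ?thesis using c unfolding c_def[symmetric] by (simp add: field_simps)
qed

lemma power_bound_limit: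
  fixes c d m t :: real
  assumes c: "c > 0" and m: "m \<ge> 0" and t: "t \<ge> 0" and h: "\<And>j. m ^ j * c \<le> t ^ j * d"
  shows "m \<le> t"
proof (rule ccontr)
  assume "\<not> m \<le> t"
  hence tm: "t < m" by simp
  hence mp: "m > 0" using t by simp
  have "(\<lambda>j. (t/m) ^ j) \<longlonglongrightarrow> 0"
    by (rule LIMSEQ_power_zero, insert tm t mp, simp)
  hence "(\<lambda>j. (t/m) ^ j * d) \<longlonglongrightarrow> 0 * d" by (intro tendsto_mult, auto)
  hence "\<forall>\<^sub>F j in sequentially. (t/m) ^ j * d < c" using c by (simp add: order_tendstoD(2))
  then obtain j where j: "(t/m) ^ j * d < c" by (auto simp: eventually_sequentially)
  have "m ^ j * c \<le> t ^ j * d" by (rule h)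
  hence "c \<le> (t ^ j * d) / m ^ j" using mp by (simp add: field_simps)
  also have "\<dots> = (t/m) ^ j * d" by (simp add: power_divide)
  finally show False using j by simp
qed

lemma eig_bound:
  fixes C :: "real mat" and y :: "nat \<Rightarrow> complex" and \<mu> :: complex
  assumes C: "C \<in> carrier_mat n n" and p: "p \<ge> 1" and j0: "j0 < n" "y j0 \<noteq> 0"
    and s: "(\<Sum>i<n. y i) = 0"
    and e: "\<And>i. i < n \<Longrightarrow> (\<Sum>l<n. of_real (C $$ (l,i)) * y l) = \<mu> * y i"
  shows "cmod \<mu> \<le> tau p C"
proof -
  define a where "a j = vec n (\<lambda>i. Re (\<mu> ^ j * y i))" for j
  define b where "b j = vec n (\<lambda>i. Im (\<mu> ^ j * y i))" for j
  have ac: "a j \<in> carrier_vec n" "b j \<in> carrier_vec n" for j unfolding a_def b_def by auto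
  have e2: "(\<Sum>l<n. of_real (C $$ (l,i)) * (\<mu> ^ j * y l)) = \<mu> ^ Suc j * y i" if i: "i < n" for i j
  proof -
    have "(\<Sum>l<n. of_real (C $$ (l,i)) * (\<mu> ^ j * y l)) = \<mu> ^ j * (\<Sum>l<n. of_real (C $$ (l,i)) * y l)"
      by (simp add: sum_distrib_left ac_simps)
    also have "\<dots> = \<mu> ^ Suc j * y i" using e[OF i] by simp
    finally show ?thesis .
  qed
  have mv: "(transpose_mat C *\<^sub>v w) $ i = (\<Sum>l<n. C $$ (l,i) * w $ l)" if "w \<in> carrier_vec n" "i < n" for w i
    using C that by (simp add: scalar_prod_def atLeast0LessThan)
  have aS: "transpose_mat C *\<^sub>v a j = a (Suc j)" for j
  proof (rule eq_vecI)
    fix i assume "i < dim_vec (a (Suc j))"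
    hence i: "i < n" unfolding a_def by auto
    have "(transpose_mat C *\<^sub>v a j) $ i = (\<Sum>l<n. C $$ (l,i) * Re (\<mu> ^ j * y l))"
      using mv[OF ac(1) i] i unfolding a_def by simp
    also have "\<dots> = Re (\<Sum>l<n. of_real (C $$ (l,i)) * (\<mu> ^ j * y l))"
      by (simp add: Re_sum)
    also have "\<dots> = a (Suc j) $ i" using e2[OF i] i unfolding a_def by simp
    finally show "(transpose_mat C *\<^sub>v a j) $ i = a (Suc j) $ i" .
  qed (insert C, auto simp: a_def)
  have bS: "transpose_mat C *\<^sub>v b j = b (Suc j)" for j
  proof (rule eq_vecI)
    fix i assume "i < dim_vec (b (Suc j))"
    hence i: "i < n" unfolding b_def by auto
    have "(transpose_mat C *\<^sub>v b j) $ i = (\<Sum>l<n. C $$ (l,i) * Im (\<mu> ^ j * y l))"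
      using mv[OF ac(2) i] i unfolding b_def by simp
    also have "\<dots> = Im (\<Sum>l<n. of_real (C $$ (l,i)) * (\<mu> ^ j * y l))"
      by (simp add: Im_sum)
    also have "\<dots> = b (Suc j) $ i" using e2[OF i] i unfolding b_def by simp
    finally show "(transpose_mat C *\<^sub>v b j) $ i = b (Suc j) $ i" .
  qed (insert C, auto simp: b_def)
  have sj: "(\<Sum>i<n. \<mu> ^ j * y i) = 0" for j using s by (simp add: sum_distrib_left[symmetric])
  have as: "(\<Sum>i<n. a j $ i) = 0" for j
  proof -
    have "(\<Sum>i<n. a j $ i) = Re (\<Sum>i<n. \<mu> ^ j * y i)" unfolding a_def Re_sum by simp
    thus ?thesis using sj by simp
  qed
  have bs: "(\<Sum>i<n. b j $ i) = 0" for j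
  proof -
    have "(\<Sum>i<n. b j $ i) = Im (\<Sum>i<n. \<mu> ^ j * y i)" unfolding b_def Im_sum by simp
    thus ?thesis using sj by simp
  qed
  define t where "t = tau p C"
  have ta: "lp_norm p (a (Suc j)) \<le> t * lp_norm p (a j)" for j
    using tau_bound[OF C p ac(1) as] unfolding aS t_def .
  have tb: "lp_norm p (b (Suc j)) \<le> t * lp_norm p (b j)" for j
    using tau_bound[OF C p ac(2) bs] unfolding bS t_def .
  have t0: "t \<ge> 0"
  proof (cases "a 0 $ j0 = 0")
    case True
    hence "b 0 $ j0 \<noteq> 0" using j0 unfolding a_def b_def by (simp add: complex_eq_iff)
    moreover have "\<bar>b 0 $ j0\<bar> \<le> lp_norm p (b 0)" using lp_norm_coord[OF p, of j0 "b 0"] j0 unfolding b_def by simp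
    ultimately have "lp_norm p (b 0) > 0" by linarith
    moreover have "0 \<le> t * lp_norm p (b 0)" using tb[of 0] lp_norm_nonneg[of p "b 1"] by simp
    ultimately show ?thesis by (simp add: zero_le_mult_iff)
  next
    case False
    moreover have "\<bar>a 0 $ j0\<bar> \<le> lp_norm p (a 0)" using lp_norm_coord[OF p, of j0 "a 0"] j0 unfolding a_def by simp
    ultimately have "lp_norm p (a 0) > 0" by linarith
    moreover have "0 \<le> t * lp_norm p (a 0)" using ta[of 0] lp_norm_nonneg[of p "a 1"] by simp
    ultimately show ?thesis by (simp add: zero_le_mult_iff)
  qed
  have an: "lp_norm p (a j) \<le> t ^ j * lp_norm p (a 0)" for j
  proof (induction j)
    case (Suc j)
    have "lp_norm p (a (Suc j)) \<le> t * lp_norm p (a j)" by (rule ta)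
    also have "\<dots> \<le> t * (t ^ j * lp_norm p (a 0))" using Suc t0 by (rule mult_left_mono)
    finally show ?case by simp
  qed simp
  have bn: "lp_norm p (b j) \<le> t ^ j * lp_norm p (b 0)" for j
  proof (induction j)
    case (Suc j)
    have "lp_norm p (b (Suc j)) \<le> t * lp_norm p (b j)" by (rule tb)
    also have "\<dots> \<le> t * (t ^ j * lp_norm p (b 0))" using Suc t0 by (rule mult_left_mono)
    finally show ?case by simp
  qed simp
  have main: "cmod \<mu> ^ j * cmod (y j0) \<le> t ^ j * (lp_norm p (a 0) + lp_norm p (b 0))" for j
  proof -
    have "cmod \<mu> ^ j * cmod (y j0) = cmod (\<mu> ^ j * y j0)" by (simp add: norm_mult norm_power)
    also have "\<dots> \<le> \<bar>Re (\<mu> ^ j * y j0)\<bar> + \<bar>Im (\<mu> ^ j * y j0)\<bar>" by (rule cmod_le)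
    also have "\<dots> = \<bar>a j $ j0\<bar> + \<bar>b j $ j0\<bar>" using j0 unfolding a_def b_def by simp
    also have "\<dots> \<le> lp_norm p (a j) + lp_norm p (b j)"
      using lp_norm_coord[OF p, of j0 "a j"] lp_norm_coord[OF p, of j0 "b j"] j0
      unfolding a_def b_def by (intro add_mono, auto)
    also have "\<dots> \<le> t ^ j * (lp_norm p (a 0) + lp_norm p (b 0))"
      using an[of j] bn[of j] by (simp add: distrib_left)
    finally show ?thesis .
  qed
  show ?thesis unfolding t_def[symmetric]
    by (rule power_bound_limit[OF _ _ t0 main], insert j0, auto)
qed



definition Pm :: "nat \<Rightarrow> complex mat" where
  "Pm n = mat n n (\<lambda>(i,j). if j = 0 then 1 else if i = j then 1 else 0)"
definition Qm :: "nat \<Rightarrow> complex mat" where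
  "Qm n = mat n n (\<lambda>(i,j). if i = j then 1 else if j = 0 then -1 else 0)"

lemma Pm_carrier[simp]: "Pm n \<in> carrier_mat n n" unfolding Pm_def by auto
lemma Qm_carrier[simp]: "Qm n \<in> carrier_mat n n" unfolding Qm_def by auto

lemma Qm_mult:
  assumes M: "M \<in> carrier_mat n n"
  shows "Qm n * M = mat n n (\<lambda>(i,j). M $$ (i,j) - (if i = 0 then 0 else M $$ (0,j)))"
proof (rule eq_matI)
  fix i j assume i: "i < dim_row (mat n n (\<lambda>(i,j). M $$ (i,j) - (if i = 0 then 0 else M $$ (0,j))))"
    and j: "j < dim_col (mat n n (\<lambda>(i,j). M $$ (i,j) - (if i = 0 then 0 else M $$ (0,j))))"
  hence i: "i < n" and j: "j < n" by auto
  have "(Qm n * M) $$ (i,j) = (\<Sum>l<n. (if i = l then 1 else if l = 0 then -1 else 0) * M $$ (l,j))"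
    using i j M by (simp add: Qm_def scalar_prod_def atLeast0LessThan)
  also have "\<dots> = (\<Sum>l<n. (if l = i then M $$ (l,j) else 0) - (if l = 0 \<and> i \<noteq> 0 then M $$ (l,j) else 0))"
    by (rule sum.cong, auto)
  also have "\<dots> = M $$ (i,j) - (if i = 0 then 0 else M $$ (0,j))"
    unfolding sum_subtractf using i by (simp add: sum.delta)
  finally show "(Qm n * M) $$ (i,j) = mat n n (\<lambda>(i,j). M $$ (i,j) - (if i = 0 then 0 else M $$ (0,j))) $$ (i,j)"
    using i j by simp
qed (insert M, auto simp: Pm_def Qm_def)

lemma mult_Pm:
  assumes M: "M \<in> carrier_mat n n"
  shows "M * Pm n = mat n n (\<lambda>(i,j). if j = 0 then (\<Sum>l<n. M $$ (i,l)) else M $$ (i,j))"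
proof (rule eq_matI)
  fix i j assume i: "i < dim_row (mat n n (\<lambda>(i,j). if j = 0 then (\<Sum>l<n. M $$ (i,l)) else M $$ (i,j)))"
    and j: "j < dim_col (mat n n (\<lambda>(i,j). if j = 0 then (\<Sum>l<n. M $$ (i,l)) else M $$ (i,j)))"
  hence i: "i < n" and j: "j < n" by auto
  have "(M * Pm n) $$ (i,j) = (\<Sum>l<n. M $$ (i,l) * (if j = 0 then 1 else if l = j then 1 else 0))"
    using i j M by (simp add: Pm_def scalar_prod_def atLeast0LessThan)
  also have "\<dots> = (if j = 0 then (\<Sum>l<n. M $$ (i,l)) else M $$ (i,j))"
    using j by (cases "j = 0", auto simp: if_distrib sum.delta' cong: if_cong)
  finally show "(M * Pm n) $$ (i,j) = mat n n (\<lambda>(i,j). if j = 0 then (\<Sum>l<n. M $$ (i,l)) else M $$ (i,j)) $$ (i,j)"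
    using i j by simp
qed (insert M, auto simp: Pm_def Qm_def)

lemma QP: "Qm n * Pm n = 1\<^sub>m n"
  by (subst Qm_mult[OF Pm_carrier], rule eq_matI, auto simp: Pm_def)

lemma PQ: "Pm n * Qm n = 1\<^sub>m n"
  by (rule mat_mult_left_right_inverse[OF Qm_carrier Pm_carrier QP])

lemma eig_exists:
  fixes N :: "complex mat" and lams :: "complex list" and r :: complex
  assumes N: "N \<in> carrier_mat n n" and n: "n \<ge> 2" and rs: "\<And>i. i < n \<Longrightarrow> (\<Sum>l<n. N $$ (i,l)) = r"
    and len: "length lams = n" and cp: "char_poly N = (\<Prod>mu\<leftarrow>lams. [:- mu, 1:])"
    and l0: "lams ! 0 = r" and i: "i \<in> {1..<n}"
  shows "\<exists>y j0. j0 < n \<and> y j0 \<noteq> 0 \<and> (\<Sum>l<n. y l) = 0 \<and>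
     (\<forall>j<n. (\<Sum>l<n. N $$ (l,j) * y l) = lams ! i * y j)"
proof -
  obtain m where nm: "n = Suc m" using n by (cases n, auto)
  obtain ls where lams: "lams = r # ls" using len n l0 by (cases lams, auto)
  have lenls: "length ls = m" using len lams nm by auto
  define lam where "lam = lams ! i"
  have lam: "lam = ls ! (i - 1)" "i - 1 < m" using i lams nm unfolding lam_def by auto
  define T where "T = Qm n * (N * Pm n)"
  have NP: "N * Pm n \<in> carrier_mat n n" by (rule mult_carrier_mat[OF N Pm_carrier])
  have Tc: "T \<in> carrier_mat n n" unfolding T_def by (rule mult_carrier_mat[OF Qm_carrier NP])
  have Tform: "T = mat n n (\<lambda>(i,j). if j = 0 then (if i = 0 then r else 0) 
       else N $$ (i,j) - (if i = 0 then 0 else N $$ (0,j)))"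
    unfolding T_def Qm_mult[OF NP] unfolding mult_Pm[OF N] by (rule eq_matI, auto simp: rs)
  define T1 where "T1 = mat 1 1 (\<lambda>_. r)"
  define X where "X = mat 1 m (\<lambda>(i,j). N $$ (0, Suc j))"
  define T' where "T' = mat m m (\<lambda>(i,j). N $$ (Suc i, Suc j) - N $$ (0, Suc j))"
  have T'c: "T' \<in> carrier_mat m m" unfolding T'_def by auto
  have T4: "T = four_block_mat T1 X (0\<^sub>m m 1) T'"
    unfolding Tform T1_def X_def T'_def nm
    by (rule eq_matI, auto simp: nth_append)
  have sim: "similar_mat N T"
    unfolding similar_mat_def similar_mat_wit_def Let_def
  proof (intro exI conjI)
    show "{N, T, Pm n, Qm n} \<subseteq> carrier_mat (dim_row N) (dim_row N)" using N Tc by auto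
    show "Pm n * Qm n = 1\<^sub>m (dim_row N)" using PQ N by auto
    show "Qm n * Pm n = 1\<^sub>m (dim_row N)" using QP N by auto
    have "Pm n * T * Qm n = Pm n * (Qm n * (N * Pm n) * Qm n)"
      unfolding T_def by (rule assoc_mult_mat[of _ n n _ n _ n], insert NP N, auto intro!: mult_carrier_mat)
    also have "Qm n * (N * Pm n) * Qm n = Qm n * (N * Pm n * Qm n)"
      by (rule assoc_mult_mat[of _ n n _ n _ n], insert NP N, auto intro!: mult_carrier_mat)
    also have "N * Pm n * Qm n = N * (Pm n * Qm n)"
      by (rule assoc_mult_mat[of _ n n _ n _ n], insert N, auto intro!: mult_carrier_mat)
    also have "\<dots> = N" using N by (simp add: PQ)
    also have "Pm n * (Qm n * N) = (Pm n * Qm n) * N"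
      by (rule assoc_mult_mat[symmetric, of _ n n _ n _ n], insert N, auto intro!: mult_carrier_mat)
    also have "\<dots> = N" using N by (simp add: PQ)
    finally show "N = Pm n * T * Qm n" by simp
  qed
  have cT1: "char_poly T1 = [:- r, 1:]"
    by (subst char_poly_upper_triangular[of T1 1], auto simp: T1_def upper_triangular_def diag_mat_def)
  have "[:- r, 1:] * char_poly T' = [:- r, 1:] * (\<Prod>mu\<leftarrow>ls. [:- mu, 1:])"
  proof -
    have "[:- r, 1:] * char_poly T' = char_poly T"
      unfolding T4 cT1[symmetric] 
      by (rule char_poly_four_block_zeros_col[symmetric], auto simp: T1_def X_def T'_def)
    also have "\<dots> = char_poly N" using char_poly_similar[OF sim] by simp
    finally show ?thesis using cp lams by simp
  qed
  moreover have nz: "[:- r, 1:] \<noteq> 0" by simp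
  ultimately have cT': "char_poly T' = (\<Prod>mu\<leftarrow>ls. [:- mu, 1:])" using mult_left_cancel[OF nz] by blast
  have "poly (char_poly T') lam = 0"
    unfolding cT' poly_prod_list using lam lenls
    by (auto simp: prod_list_zero_iff o_def)
  hence "eigenvalue (transpose_mat T') lam"
    using eigenvalue_root_char_poly[of "transpose_mat T'" m lam] T'c by auto
  then obtain u where u: "u \<in> carrier_vec m" "u \<noteq> 0\<^sub>v m" "transpose_mat T' *\<^sub>v u = lam \<cdot>\<^sub>v u"
    unfolding eigenvalue_def eigenvector_def using T'c by auto
  have ue: "(\<Sum>i<m. T' $$ (i,j') * u $ i) = lam * u $ j'" if j': "j' < m" for j'
  proof -
    have "(transpose_mat T' *\<^sub>v u) $ j' = (\<Sum>i<m. T' $$ (i,j') * u $ i)"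
      using T'c u(1) j' by (simp add: scalar_prod_def atLeast0LessThan)
    thus ?thesis using u(3) j' u(1) by simp
  qed
  obtain i0 where i0: "i0 < m" "u $ i0 \<noteq> 0"
  proof -
    have "\<exists>i0<m. u $ i0 \<noteq> 0"
    proof (rule ccontr)
      assume "\<not> ?thesis"
      hence "u = 0\<^sub>v m" using u(1) by (intro eq_vecI, auto)
      thus False using u(2) by simp
    qed
    thus ?thesis using that by blast
  qed
  define y where "y l = (if l = 0 then - (\<Sum>i<m. u $ i) else u $ (l - 1))" for l
  have ys: "(\<Sum>l<n. y l) = 0" unfolding nm sum.lessThan_Suc_shift by (simp add: y_def)
  have E0: "(\<Sum>l<n. N $$ (l,j) * y l) = (\<Sum>i<m. (N $$ (Suc i, j) - N $$ (0,j)) * u $ i)" for j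
  proof -
    have "(\<Sum>l<n. N $$ (l,j) * y l) = N $$ (0,j) * (- (\<Sum>i<m. u $ i)) + (\<Sum>i<m. N $$ (Suc i, j) * u $ i)"
      unfolding nm sum.lessThan_Suc_shift by (simp add: y_def)
    also have "\<dots> = (\<Sum>i<m. N $$ (Suc i, j) * u $ i) - (\<Sum>i<m. N $$ (0,j) * u $ i)"
      by (simp add: sum_distrib_left)
    also have "\<dots> = (\<Sum>i<m. (N $$ (Suc i, j) - N $$ (0,j)) * u $ i)"
      by (simp add: sum_subtractf left_diff_distrib)
    finally show ?thesis .
  qed
  have eig: "(\<Sum>l<n. N $$ (l,j) * y l) = lam * y j" if j: "j < n" for j
  proof (cases j)
    case (Suc j')
    hence j': "j' < m" using j nm by auto
    have "(\<Sum>l<n. N $$ (l,j) * y l) = (\<Sum>i<m. T' $$ (i,j') * u $ i)"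
      unfolding E0 Suc T'_def using j' by (intro sum.cong, auto)
    also have "\<dots> = lam * y j" using ue[OF j'] Suc by (simp add: y_def)
    finally show ?thesis .
  next
    case 0
    have row: "N $$ (k, 0) = r - (\<Sum>j'<m. N $$ (k, Suc j'))" if "k < n" for k
      using rs[OF that] unfolding nm sum.lessThan_Suc_shift by (simp add: algebra_simps)
    have d: "N $$ (Suc i, 0) - N $$ (0,0) = - (\<Sum>j'<m. T' $$ (i,j'))" if "i < m" for i
      using row[of "Suc i"] row[of 0] that nm unfolding T'_def by (simp add: sum_subtractf)
    have "(\<Sum>l<n. N $$ (l,j) * y l) = (\<Sum>i<m. - (\<Sum>j'<m. T' $$ (i,j')) * u $ i)"
      unfolding E0 0 using d by (intro sum.cong, auto)
    also have "\<dots> = - (\<Sum>i<m. \<Sum>j'<m. T' $$ (i,j') * u $ i)"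
      by (simp add: sum_distrib_right sum_negf)
    also have "\<dots> = - (\<Sum>j'<m. \<Sum>i<m. T' $$ (i,j') * u $ i)"
      by (subst sum.swap, rule refl)
    also have "\<dots> = - (\<Sum>j'<m. lam * u $ j')" using ue by simp
    also have "\<dots> = lam * y j" using 0 by (simp add: y_def sum_distrib_left)
    finally show ?thesis .
  qed
  show ?thesis
    by (rule exI[of _ y], rule exI[of _ "Suc i0"], insert i0 nm ys eig, auto simp: y_def lam_def)
qed


lemma pow_carrier: "B \<in> carrier_mat n n \<Longrightarrow> B ^\<^sub>m k \<in> carrier_mat n n"
  by (rule carrier_matI, auto)

lemma pow_eig:
  fixes B :: "real mat" and y :: "nat \<Rightarrow> complex"
  assumes B: "B \<in> carrier_mat n n"
    and e: "\<And>j. j < n \<Longrightarrow> (\<Sum>l<n. of_real (B $$ (l,j)) * y l) = lam * y j"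
  shows "j < n \<Longrightarrow> (\<Sum>l<n. of_real ((B ^\<^sub>m k) $$ (l,j)) * y l) = lam ^ k * y j"
proof (induction k arbitrary: j)
  case 0
  have "(\<Sum>l<n. of_real ((B ^\<^sub>m 0) $$ (l,j)) * y l) = (\<Sum>l<n. if l = j then y l else 0)"
    using B 0 by (intro sum.cong, auto)
  also have "\<dots> = y j" using 0 by (simp add: sum.delta')
  finally show ?case by simp
next
  case (Suc k)
  have Bk: "B ^\<^sub>m k \<in> carrier_mat n n" by (rule pow_carrier[OF B])
  have "(\<Sum>l<n. of_real ((B ^\<^sub>m Suc k) $$ (l,j)) * y l) = 
        (\<Sum>l<n. \<Sum>q<n. of_real (B $$ (q,j)) * (of_real ((B ^\<^sub>m k) $$ (l,q)) * y l))"
    using B Bk Suc.prems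
    by (intro sum.cong, auto simp: scalar_prod_def atLeast0LessThan sum_distrib_right sum_distrib_left ac_simps)
  also have "\<dots> = (\<Sum>q<n. \<Sum>l<n. of_real (B $$ (q,j)) * (of_real ((B ^\<^sub>m k) $$ (l,q)) * y l))"
    by (rule sum.swap)
  also have "\<dots> = (\<Sum>q<n. of_real (B $$ (q,j)) * (lam ^ k * y q))"
    by (intro sum.cong refl, subst sum_distrib_left[symmetric], subst Suc.IH, auto)
  also have "\<dots> = lam ^ k * (\<Sum>q<n. of_real (B $$ (q,j)) * y q)"
    by (simp add: sum_distrib_left ac_simps)
  also have "\<dots> = lam ^ Suc k * y j" using e[OF Suc.prems] by simp
  finally show ?case .
qed

theorem corollary3:
  fixes n :: nat and A :: "real mat" and lams :: "complex list"
    and r :: real and v :: "real vec"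
  assumes "n \<ge> 2"
    and "A \<in> carrier_mat n n"
    and "length lams = n"
    and "char_poly (map_mat complex_of_real A) = (\<Prod>mu\<leftarrow>lams. [:- mu, 1:])"
    and "lams ! 0 = complex_of_real r"
    and "v \<in> carrier_vec n"
    and "A *\<^sub>v v = r \<cdot>\<^sub>v v"
    and "\<forall>i<n. v $ i \<noteq> 0"
  shows "\<forall>p::enat. p \<ge> 1 \<longrightarrow> (\<forall>i\<in>{1..<n}. \<forall>k::nat. k \<ge> 1 \<longrightarrow>
           cmod (lams ! i) \<le> root k (tau p
              ((mat_diag n (\<lambda>j. 1 / v $ j) * A * mat_diag n (\<lambda>j. v $ j)) ^\<^sub>m k)))"
proof (intro allI impI ballI)
  fix p :: enat and i k :: nat
  assume p: "p \<ge> 1" and i: "i \<in> {1..<n}" and k: "k \<ge> 1"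
  note n = assms(1) and A = assms(2) and len = assms(3) and cp = assms(4) and l0 = assms(5)
    and v = assms(6) and Av = assms(7) and v0 = assms(8)
  define B where "B = mat_diag n (\<lambda>j. 1 / v $ j) * A * mat_diag n (\<lambda>j. v $ j)"
  have Bf: "B = mat n n (\<lambda>(i,j). (1 / v $ i * A $$ (i,j)) * v $ j)"
    unfolding B_def mat_diag_mult_left[OF A]
    by (subst mat_diag_mult_right[of _ n], auto)
  have Bc: "B \<in> carrier_mat n n" unfolding Bf by auto
  have rs: "(\<Sum>l<n. B $$ (i,l)) = r" if i: "i < n" for i
  proof -
    have "(\<Sum>l<n. B $$ (i,l)) = 1 / v $ i * (\<Sum>l<n. A $$ (i,l) * v $ l)"
      unfolding Bf using i by (simp add: sum_distrib_left ac_simps)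
    also have "(\<Sum>l<n. A $$ (i,l) * v $ l) = (A *\<^sub>v v) $ i"
      using A v i by (simp add: scalar_prod_def atLeast0LessThan)
    also have "\<dots> = r * v $ i" using Av i v by simp
    finally show ?thesis using v0 i by simp
  qed
  have simAB: "similar_mat A B"
    unfolding similar_mat_def similar_mat_wit_def Let_def
  proof (intro exI conjI)
    show "{A, B, mat_diag n (\<lambda>j. v $ j), mat_diag n (\<lambda>j. 1 / v $ j)} \<subseteq> carrier_mat (dim_row A) (dim_row A)"
      using A Bc by auto
    show "mat_diag n (\<lambda>j. v $ j) * mat_diag n (\<lambda>j. 1 / v $ j) = 1\<^sub>m (dim_row A)"
      unfolding mat_diag_diag using A v0 by (intro eq_matI, auto simp: mat_diag_def)
    show "mat_diag n (\<lambda>j. 1 / v $ j) * mat_diag n (\<lambda>j. v $ j) = 1\<^sub>m (dim_row A)"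
      unfolding mat_diag_diag using A v0 by (intro eq_matI, auto simp: mat_diag_def)
    show "A = mat_diag n (\<lambda>j. v $ j) * B * mat_diag n (\<lambda>j. 1 / v $ j)"
      unfolding mat_diag_mult_left[OF Bc]
      by (subst mat_diag_mult_right[of _ n], force, rule eq_matI, insert A v0, auto simp: Bf)
  qed
  define N where "N = map_mat complex_of_real B"
  have Nc: "N \<in> carrier_mat n n" unfolding N_def using Bc by auto
  have cpN: "char_poly N = (\<Prod>mu\<leftarrow>lams. [:- mu, 1:])"
    unfolding N_def of_real_hom.char_poly_hom[OF Bc] char_poly_similar[OF simAB, symmetric]
      of_real_hom.char_poly_hom[OF A, symmetric] by (rule cp)
  have rsN: "(\<Sum>l<n. N $$ (i,l)) = complex_of_real r" if "i < n" for i
    using rs[OF that] that Bc unfolding N_def by (simp add: of_real_sum[symmetric])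
  from eig_exists[OF Nc n rsN len cpN l0 i]
  obtain y j0 where y: "j0 < n" "y j0 \<noteq> 0" "(\<Sum>l<n. y l) = 0"
    "\<And>j. j < n \<Longrightarrow> (\<Sum>l<n. N $$ (l,j) * y l) = lams ! i * y j" by blast
  have eB: "(\<Sum>l<n. of_real (B $$ (l,j)) * y l) = lams ! i * y j" if j: "j < n" for j
    using y(4)[OF j] j Bc unfolding N_def by simp
  have eBk: "(\<Sum>l<n. of_real ((B ^\<^sub>m k) $$ (l,j)) * y l) = (lams ! i) ^ k * y j" if j: "j < n" for j
    by (rule pow_eig[OF Bc eB j])
  have "cmod ((lams ! i) ^ k) \<le> tau p (B ^\<^sub>m k)"
    by (rule eig_bound[OF pow_carrier[OF Bc] p y(1,2,3) eBk])
  hence "cmod (lams ! i) ^ k \<le> tau p (B ^\<^sub>m k)" by (simp add: norm_power)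
  hence "root k (cmod (lams ! i) ^ k) \<le> root k (tau p (B ^\<^sub>m k))"
    using k by (intro real_root_le_mono, auto)
  thus "cmod (lams ! i) \<le> root k (tau p (B ^\<^sub>m k))"
    using k by (simp add: real_root_power_cancel)
qed

end
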